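(* Let $\sigma_1=\sigma_x,\sigma_2=\sigma_y,\sigma_3=\sigma_z$ and, for $\underline{\lambda}\in\mathbb{R}^3$, $U_{\underline{\lambda}}=\exp\{-i\sum_{j=1}^3\lambda_j\,\sigma_j\otimes\sigma_j\}$. Let the probe be $|\psi_0\rangle=(\alpha,\ \beta e^{i\phi_\beta},\ \gamma e^{i\phi_\gamma},\ \delta e^{i\phi_\delta})^T$ in the computational basis $\{|00\rangle,|01\rangle,|10\rangle,|11\rangle\}$, with $\alpha,\beta,\gamma,\delta\in[0,1]$, $\alpha^2+\beta^2+\gamma^2+\delta^2=1$, $\phi_\beta,\phi_\gamma,\phi_\delta\in[0,2\pi)$, and let $Q$ be the quantum Fisher information matrix of the model $\underline{\lambda}\mapsto U_{\underline{\lambda}}|\psi_0\rangle$. Then $$\mathrm{Det}[Q]=1024\left[\alpha^4+\delta^4-2\alpha^2\delta^2\cos 2\phi_\delta\right]\left[\beta^4+\gamma^4-2\beta^2\gamma^2\cos\big(2(\phi_\beta-\phi_\gamma)\big)\right],$$ and, whenever $Q$ is invertible, $$\mathrm{Tr}[Q^{-1}]=\frac{3}{16}\left(\frac{\alpha^2+\delta^2}{\alpha^4-2\alpha^2\delta^2\cos 2\phi_\delta+\delta^4}+\frac{\beta^2+\gamma^2}{\beta^4-2\beta^2\gamma^2\cos\big(2(\phi_\beta-\phi_\gamma)\big)+\gamma^4}\right).$$ In particular both quantities are independent of $\underline{\lambda}$.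
   Context: For a pure-state model $\underline{\lambda}\mapsto|\psi_{\underline{\lambda}}\rangle$, with $\partial_j=\partial/\partial\lambda_j$, the quantum Fisher information matrix is $Q_{jk}=4\,\mathrm{Re}\big[\langle\partial_j\psi|\partial_k\psi\rangle-\langle\partial_j\psi|\psi\rangle\langle\psi|\partial_k\psi\rangle\big]$, $j,k\in\{1,2,3\}$. *)

theory Defs
  imports "HOL-Analysis.Analysis"
begin

fun mpow :: "complex^'n^'n \<Rightarrow> nat \<Rightarrow> complex^'n^'n" where
  "mpow A 0 = mat 1"
| "mpow A (Suc n) = A ** mpow A n"

definition mexp :: "complex^'n^'n \<Rightarrow> complex^'n^'n" where
  "mexp A = (\<Sum>n. (1 / fact n) *\<^sub>R mpow A n)"

text \<open>Pauli matrices, basis index 0 = |0>, 1 = |1>.\<close>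

definition sigma_x :: "complex^2^2" where
  "sigma_x = (\<chi> i j. if i = j then 0 else 1)"

definition sigma_y :: "complex^2^2" where
  "sigma_y = (\<chi> i j. if i = j then 0 else if i = 0 then - \<i> else \<i>)"

definition sigma_z :: "complex^2^2" where
  "sigma_z = (\<chi> i j. if i \<noteq> j then 0 else if i = 0 then 1 else -1)"

text \<open>sigma_1 = sigma_x, sigma_2 = sigma_y, sigma_3 = sigma_z (in type 3, the index 3 equals 0).\<close>

definition pauli :: "3 \<Rightarrow> complex^2^2" where
  "pauli j = (if j = 1 then sigma_x else if j = 2 then sigma_y else sigma_z)"

text \<open>Two-qubit computational basis |00>,|01>,|10>,|11> is indexed by 0,1,2,3 :: 4;
  first (high) qubit and second (low) qubit of an index.\<close>

definition qhi :: "4 \<Rightarrow> 2" where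
  "qhi i = (if i = 0 \<or> i = 1 then 0 else 1)"

definition qlo :: "4 \<Rightarrow> 2" where
  "qlo i = (if i = 0 \<or> i = 2 then 0 else 1)"

definition kron :: "complex^2^2 \<Rightarrow> complex^2^2 \<Rightarrow> complex^4^4" where
  "kron A B = (\<chi> i j. A $ qhi i $ qhi j * B $ qlo i $ qlo j)"

definition hamil :: "real^3 \<Rightarrow> complex^4^4" where
  "hamil lam = (\<chi> a b. \<Sum>j\<in>UNIV. complex_of_real (lam $ j) * kron (pauli j) (pauli j) $ a $ b)"

definition Uop :: "real^3 \<Rightarrow> complex^4^4" where
  "Uop lam = mexp (\<chi> a b. - \<i> * hamil lam $ a $ b)"

definition probe :: "real \<Rightarrow> real \<Rightarrow> real \<Rightarrow> real \<Rightarrow> real \<Rightarrow> real \<Rightarrow> real \<Rightarrow> complex^4" where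
  "probe \<alpha> \<beta> \<gamma> \<delta> \<phi>\<beta> \<phi>\<gamma> \<phi>\<delta> =
     (\<chi> i. if i = 0 then complex_of_real \<alpha>
           else if i = 1 then complex_of_real \<beta> * cis \<phi>\<beta>
           else if i = 2 then complex_of_real \<gamma> * cis \<phi>\<gamma>
           else complex_of_real \<delta> * cis \<phi>\<delta>)"

definition braket :: "complex^'n \<Rightarrow> complex^'n \<Rightarrow> complex" where
  "braket u v = (\<Sum>i\<in>UNIV. cnj (u $ i) * v $ i)"

definition pderiv_state :: "(real^3 \<Rightarrow> complex^'n) \<Rightarrow> 3 \<Rightarrow> real^3 \<Rightarrow> complex^'n" where
  "pderiv_state psi j lam = vector_derivative (\<lambda>t. psi (lam + t *\<^sub>R axis j 1)) (at 0)"

definition QFIM :: "(real^3 \<Rightarrow> complex^'n) \<Rightarrow> real^3 \<Rightarrow> real^3^3" where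
  "QFIM psi lam = (\<chi> j k. 4 * Re (braket (pderiv_state psi j lam) (pderiv_state psi k lam)
      - braket (pderiv_state psi j lam) (psi lam) * braket (psi lam) (pderiv_state psi k lam)))"

end

theory Submission
  imports Defs
begin

lemma univ4: "(UNIV::4 set) = {0,1,2,3}"
  using UNIV_4 by auto
lemma sum4: "sum f (UNIV::4 set) = f 0 + f 1 + f 2 + f 3"
  unfolding univ4 by (simp add: ac_simps)
lemma ex4: "(x::4) = 0 \<or> x = 1 \<or> x = 2 \<or> x = 3"
  using univ4 by auto

definition bv :: "4 \<Rightarrow> 4 \<Rightarrow> real" where
 "bv m a = (if m = 0 then (if a = 0 \<or> a = 3 then 1 else 0)
   else if m = 1 then (if a = 0 then 1 else if a = 3 then -1 else 0)
   else if m = 2 then (if a = 1 \<or> a = 2 then 1 else 0)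
   else (if a = 1 then 1 else if a = 2 then -1 else 0))"

definition sg :: "3 \<Rightarrow> 4 \<Rightarrow> real" where
 "sg j m = (if j = 1 then (if m = 0 \<or> m = 2 then 1 else -1)
   else if j = 2 then (if m = 2 \<or> m = 1 then 1 else -1)
   else (if m = 0 \<or> m = 1 then 1 else -1))"

definition dd :: "real^3 \<Rightarrow> 4 \<Rightarrow> real" where
  "dd lam m = (\<Sum>j\<in>UNIV. lam $ j * sg j m)"

definition PP :: "4 \<Rightarrow> 4 \<Rightarrow> 4 \<Rightarrow> complex" where
  "PP m a b = complex_of_real (bv m a * bv m b / 2)"

lemma hamil_eq: "hamil lam $ a $ b = (\<Sum>m\<in>UNIV. complex_of_real (dd lam m) * PP m a b)"
proof -
  have "a = 0 \<or> a = 1 \<or> a = 2 \<or> a = 3" "b = 0 \<or> b = 1 \<or> b = 2 \<or> b = 3" using ex4 by auto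
  then show ?thesis
    by (auto simp: hamil_def kron_def pauli_def sigma_x_def sigma_y_def sigma_z_def qhi_def qlo_def
        sum_3 sum4 dd_def PP_def bv_def sg_def algebra_simps) (simp_all add: field_simps)
qed

lemma case4: "(P 0 \<and> P 1 \<and> P 2 \<and> P 3) \<Longrightarrow> P (a::4)"
  using ex4[of a] by auto

lemma prodPP: "(\<Sum>c\<in>UNIV. (\<Sum>m\<in>UNIV. x m * PP m a c) * (\<Sum>l\<in>UNIV. y l * PP l c b))
   = (\<Sum>m\<in>UNIV. x m * y m * PP m a b)"
proof -
  have "a = 0 \<or> a = 1 \<or> a = 2 \<or> a = 3" "b = 0 \<or> b = 1 \<or> b = 2 \<or> b = 3" using ex4 by auto
  then show ?thesis
    by (auto simp: sum4 PP_def bv_def) (simp_all add: field_simps)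
qed

lemma completePP: "(\<Sum>m\<in>UNIV. PP m a b) = (if a = b then 1 else 0)"
proof -
  have "a = 0 \<or> a = 1 \<or> a = 2 \<or> a = 3" "b = 0 \<or> b = 1 \<or> b = 2 \<or> b = 3" using ex4 by auto
  then show ?thesis
    by (auto simp: sum4 PP_def bv_def)
qed

lemma mpow_spec: "mpow (\<chi> a b. \<Sum>m\<in>UNIV. c m * PP m a b) n = (\<chi> a b. \<Sum>m\<in>UNIV. c m ^ n * PP m a b)"
proof (induction n)
  case 0
  then show ?case by (simp add: vec_eq_iff mat_def completePP)
next
  case (Suc n)
  then show ?case by (simp add: vec_eq_iff matrix_matrix_mult_def prodPP mult.assoc)
qed

lemma vec_sums:
  fixes f :: "nat \<Rightarrow> 'a::real_normed_vector ^'n"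
  assumes "\<And>i. (\<lambda>n. f n $ i) sums (l $ i)"
  shows "f sums l"
  using assms unfolding sums_def by (auto intro!: vec_tendstoI simp: sum_component)

lemma mexp_spec: "mexp (\<chi> a b. \<Sum>m\<in>UNIV. c m * PP m a b) = (\<chi> a b. \<Sum>m\<in>UNIV. exp (c m) * PP m a b)"
proof -
  have *: "(\<lambda>n. ((1 / fact n) *\<^sub>R mpow (\<chi> a b. \<Sum>m\<in>UNIV. c m * PP m a b) n) $ a $ b)
      sums (\<Sum>m\<in>UNIV. exp (c m) * PP m a b)" for a b
  proof -
    have "(\<lambda>n. \<Sum>m\<in>UNIV. (c m ^ n /\<^sub>R fact n) * PP m a b) sums (\<Sum>m\<in>UNIV. exp (c m) * PP m a b)"
      by (intro sums_sum sums_mult2 exp_converges)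
    moreover have "((1 / fact n) *\<^sub>R mpow (\<chi> a b. \<Sum>m\<in>UNIV. c m * PP m a b) n) $ a $ b
        = (\<Sum>m\<in>UNIV. (c m ^ n /\<^sub>R fact n) * PP m a b)" for n
      by (simp add: mpow_spec scaleR_sum_right divide_inverse_commute)
    ultimately show ?thesis by simp
  qed
  show ?thesis unfolding mexp_def
    by (rule sums_unique[symmetric], rule vec_sums, rule vec_sums) (use * in simp)
qed

lemma Uop_eq: "Uop lam = (\<chi> a b. \<Sum>m\<in>UNIV. exp (- \<i> * complex_of_real (dd lam m)) * PP m a b)"
proof -
  have eq: "(\<chi> a b. - \<i> * hamil lam $ a $ b) = (\<chi> a b. \<Sum>m\<in>UNIV. (- \<i> * complex_of_real (dd lam m)) * PP m a b)"
    by (simp add: hamil_eq sum_distrib_left mult.assoc)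
  show ?thesis unfolding Uop_def eq by (rule mexp_spec)
qed

definition bvec :: "(4 \<Rightarrow> complex) \<Rightarrow> complex^4" where
  "bvec x = (\<chi> a. \<Sum>m\<in>UNIV. x m * complex_of_real (bv m a))"

definition ww :: "complex^4 \<Rightarrow> 4 \<Rightarrow> complex" where
  "ww v m = (\<Sum>b\<in>UNIV. complex_of_real (bv m b) * v $ b) / 2"

lemma mulvec_spec: "(\<chi> a b. \<Sum>m\<in>UNIV. e m * PP m a b) *v v = bvec (\<lambda>m. e m * ww v m)"
  unfolding vec_eq_iff
proof
  fix a :: 4
  have "a = 0 \<or> a = 1 \<or> a = 2 \<or> a = 3" using ex4 by auto
  then show "((\<chi> a b. \<Sum>m\<in>UNIV. e m * PP m a b) *v v) $ a = bvec (\<lambda>m. e m * ww v m) $ a"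
    by (auto simp: sum4 PP_def bv_def bvec_def ww_def matrix_vector_mult_def) (simp_all add: field_simps)
qed

lemma braket_bvec: "braket (bvec x) (bvec y) = 2 * (\<Sum>m\<in>UNIV. cnj (x m) * y m)"
  by (simp add: braket_def bvec_def sum4 bv_def) (simp add: field_simps)

lemma dd_shift: "dd (lam + t *\<^sub>R axis j 1) m = dd lam m + t * sg j m"
proof -
  have "j = 1 \<or> j = 2 \<or> j = 3" using exhaust_3 by auto
  then show ?thesis by (auto simp: dd_def sum_3 axis_def algebra_simps)
qed

lemma bl_K: "bounded_linear (\<lambda>z::complex. (\<chi> a. z * complex_of_real (bv m a)) :: complex^4)"
proof -
  have "linear (\<lambda>z::complex. (\<chi> a. z * complex_of_real (bv m a)) :: complex^4)"
    by (rule linearI) (simp_all add: vec_eq_iff distrib_right)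
  then show ?thesis by (simp add: linear_conv_bounded_linear)
qed

lemma bvec_sum: "bvec x = (\<Sum>m\<in>UNIV. (\<chi> a. x m * complex_of_real (bv m a)))"
  by (simp add: bvec_def vec_eq_iff)

lemma scal_deriv: "((\<lambda>t. exp (- \<i> * complex_of_real (D + t * s)) * w) has_vector_derivative
     (- \<i> * complex_of_real s * exp (- \<i> * complex_of_real D) * w)) (at 0)"
proof -
  have "((\<lambda>z. exp (- \<i> * (complex_of_real D + z * complex_of_real s)) * w) has_field_derivative
     (exp (- \<i> * (complex_of_real D + complex_of_real 0 * complex_of_real s)) * (- \<i> * (0 + 1 * complex_of_real s)) * w)) (at (complex_of_real 0))"
    by (auto intro!: derivative_eq_intros)
  from has_vector_derivative_real_field[OF this, where s=UNIV]
  show ?thesis by (simp add: algebra_simps)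
qed

lemma deriv_bvec: "((\<lambda>t. bvec (\<lambda>m. exp (- \<i> * complex_of_real (D m + t * s m)) * w m)) has_vector_derivative
     bvec (\<lambda>m. - \<i> * complex_of_real (s m) * exp (- \<i> * complex_of_real (D m)) * w m)) (at 0)"
  unfolding bvec_sum
  by (intro has_vector_derivative_sum bounded_linear.has_vector_derivative[OF bl_K] scal_deriv)

definition psiv where "psiv v = (\<lambda>l. Uop l *v v)"

lemma psi_eq: "psiv v l = bvec (\<lambda>m. exp (- \<i> * complex_of_real (dd l m)) * ww v m)"
  unfolding psiv_def Uop_eq by (rule mulvec_spec)

lemma pderiv_eq: "pderiv_state (psiv v) j lam =
   bvec (\<lambda>m. - \<i> * complex_of_real (sg j m) * exp (- \<i> * complex_of_real (dd lam m)) * ww v m)"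
  unfolding pderiv_state_def psi_eq dd_shift
  by (rule vector_derivative_at, rule deriv_bvec)

lemma cj1: "cnj (- \<i> * complex_of_real a * exp (- \<i> * complex_of_real r) * w) *
   (- \<i> * complex_of_real b * exp (- \<i> * complex_of_real r) * w) = complex_of_real (a * b * (cmod w)^2)"
proof -
  have "cnj (exp (- \<i> * complex_of_real r)) * exp (- \<i> * complex_of_real r) = 1"
  proof -
    have "cnj (exp (- \<i> * complex_of_real r)) = exp (- (- \<i> * complex_of_real r))"
      by (simp add: exp_cnj)
    then show ?thesis by (simp add: exp_minus_inverse mult.commute)
  qed
  moreover have "cnj w * w = complex_of_real ((cmod w)^2)"
    using complex_norm_square[of w] by (simp add: mult.commute)
  ultimately show ?thesis
    by (simp add: algebra_simps)
qed

lemma Eunit: "cnj (exp (- \<i> * complex_of_real r)) * exp (- \<i> * complex_of_real r) = 1"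
proof -
  have "cnj (exp (- \<i> * complex_of_real r)) = exp (- (- \<i> * complex_of_real r))"
    by (simp add: exp_cnj)
  then show ?thesis by (simp add: exp_minus_inverse mult.commute)
qed

lemma wnorm: "cnj w * w = complex_of_real ((cmod w)^2)"
  using complex_norm_square[of w] by (simp add: mult.commute)

lemma cj2: "cnj (- \<i> * complex_of_real a * exp (- \<i> * complex_of_real r) * w) *
   (exp (- \<i> * complex_of_real r) * w) = \<i> * complex_of_real (a * (cmod w)^2)"
  using Eunit[of r] wnorm[of w] by (simp add: algebra_simps)

lemma cj3: "cnj (exp (- \<i> * complex_of_real r) * w) *
   (- \<i> * complex_of_real a * exp (- \<i> * complex_of_real r) * w) = - \<i> * complex_of_real (a * (cmod w)^2)"
  using Eunit[of r] wnorm[of w] by (simp add: algebra_simps)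

definition qq where "qq v m = (cmod (ww v m))^2"

lemma QFIM_eq: "QFIM (psiv v) lam $ j $ k = 4 * (2 * (\<Sum>m\<in>UNIV. sg j m * sg k m * qq v m)
   - 4 * (\<Sum>m\<in>UNIV. sg j m * qq v m) * (\<Sum>m\<in>UNIV. sg k m * qq v m))"
proof -
  have b1: "braket (pderiv_state (psiv v) j lam) (pderiv_state (psiv v) k lam)
     = complex_of_real (2 * (\<Sum>m\<in>UNIV. sg j m * sg k m * qq v m))"
    by (simp only: pderiv_eq braket_bvec cj1) (simp add: qq_def)
  have b2: "braket (pderiv_state (psiv v) j lam) (psiv v lam)
     = \<i> * complex_of_real (2 * (\<Sum>m\<in>UNIV. sg j m * qq v m))"
    by (simp only: pderiv_eq psi_eq braket_bvec cj2) (simp add: qq_def sum_distrib_left mult.left_commute)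
  have b3: "braket (psiv v lam) (pderiv_state (psiv v) k lam)
     = - \<i> * complex_of_real (2 * (\<Sum>m\<in>UNIV. sg k m * qq v m))"
    by (simp only: pderiv_eq psi_eq braket_bvec cj3) (simp add: qq_def sum_distrib_left mult.left_commute)
  show ?thesis unfolding QFIM_def by (simp add: b1 b2 b3 algebra_simps)
qed


definition QP :: "(4 \<Rightarrow> real) \<Rightarrow> real^3^3" where
  "QP P = (\<chi> j k. 4 * ((\<Sum>m\<in>UNIV. sg j m * sg k m * P m) - (\<Sum>m\<in>UNIV. sg j m * P m) * (\<Sum>m\<in>UNIV. sg k m * P m)))"
definition RP :: "(4 \<Rightarrow> real) \<Rightarrow> 4 \<Rightarrow> real" where
  "RP P m = (if m = 0 then P 1 * P 2 * P 3 else if m = 1 then P 0 * P 2 * P 3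
     else if m = 2 then P 0 * P 1 * P 3 else P 0 * P 1 * P 2)"
definition NP :: "(4 \<Rightarrow> real) \<Rightarrow> real^3^3" where
  "NP P = (\<chi> j k. (\<Sum>m\<in>UNIV. sg j m * sg k m * RP P m))"
lemma QN: assumes "P 0 + P 1 + P 2 + P 3 = 1"
  shows "QP P ** NP P = (64 * P 0 * P 1 * P 2 * P 3) *\<^sub>R mat 1"
proof -
  have e: "P 3 = 1 - P 0 - P 1 - P 2" using assms by simp
  show ?thesis
    unfolding vec_eq_iff forall_3
    by (simp add: QP_def NP_def RP_def matrix_matrix_mult_def mat_def sum_3 sum4 sg_def e) (intro conjI; algebra)
qed
lemma NQ: assumes "P 0 + P 1 + P 2 + P 3 = 1"
  shows "NP P ** QP P = (64 * P 0 * P 1 * P 2 * P 3) *\<^sub>R mat 1"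
proof -
  have e: "P 3 = 1 - P 0 - P 1 - P 2" using assms by simp
  show ?thesis
    unfolding vec_eq_iff forall_3
    by (simp add: QP_def NP_def RP_def matrix_matrix_mult_def mat_def sum_3 sum4 sg_def e) (intro conjI; algebra)
qed

lemma inv_unique:
  fixes A M :: "real^3^3"
  assumes "A ** M = mat 1" "M ** A = mat 1"
  shows "matrix_inv A = M"
  unfolding matrix_inv_def
proof (rule some_equality)
  show "A ** M = mat 1 \<and> M ** A = mat 1" using assms by simp
next
  fix M' :: "real^3^3" assume h: "A ** M' = mat 1 \<and> M' ** A = mat 1"
  have "M' = M' ** (A ** M)" using assms by simp
  also have "\<dots> = (M' ** A) ** M" by (simp add: matrix_mul_assoc)
  also have "\<dots> = M" using h by simp
  finally show "M' = M" .
qed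

lemma trace_NP: "trace (NP P) = 3 * (P 1 * P 2 * P 3 + P 0 * P 2 * P 3 + P 0 * P 1 * P 3 + P 0 * P 1 * P 2)"
  by (simp add: trace_def sum_3 NP_def sum4 sg_def RP_def)

lemma trace_scale: "trace (c *\<^sub>R (A::real^3^3)) = c * trace A"
  by (simp add: trace_def sum_distrib_left)

lemma trace_QP: assumes "P 0 + P 1 + P 2 + P 3 = 1" "P 0 \<noteq> 0" "P 1 \<noteq> 0" "P 2 \<noteq> 0" "P 3 \<noteq> 0"
  shows "trace (matrix_inv (QP P)) = 3 / 64 * (1 / P 0 + 1 / P 1 + 1 / P 2 + 1 / P 3)"
proof -
  define c where "c = 1 / (64 * P 0 * P 1 * P 2 * P 3)"
  have c: "c * (64 * P 0 * P 1 * P 2 * P 3) = 1" using assms by (simp add: c_def)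
  have "QP P ** (c *\<^sub>R NP P) = mat 1"
    by (simp add: matrix_scalar_ac scalar_matrix_assoc[symmetric] QN[OF assms(1)] c)
  moreover have "(c *\<^sub>R NP P) ** QP P = mat 1"
    by (simp add: scalar_matrix_assoc[symmetric] NQ[OF assms(1)] c)
  ultimately have "matrix_inv (QP P) = c *\<^sub>R NP P" by (rule inv_unique)
  moreover have "c * (3 * (P 1 * P 2 * P 3 + P 0 * P 2 * P 3 + P 0 * P 1 * P 3 + P 0 * P 1 * P 2))
      = 3 / 64 * (1 / P 0 + 1 / P 1 + 1 / P 2 + 1 / P 3)"
    using assms(2-5) unfolding c_def by (simp add: field_simps)
  ultimately show ?thesis by (simp add: trace_scale trace_NP)
qed

lemma det_QP: assumes "P 0 + P 1 + P 2 + P 3 = 1"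
  shows "det (QP P) = 16384 * P 0 * P 1 * P 2 * P 3"
proof -
  have e: "P 3 = 1 - P 0 - P 1 - P 2" using assms by simp
  show ?thesis unfolding det_3 by (simp add: QP_def sum4 sg_def e) algebra
qed

lemma sinsq: "sin (x::real) * sin x = 1 - cos x * cos x"
  using sin_squared_eq[of x] by (simp add: power2_eq_square)
lemma cm1: "(cmod (complex_of_real a + complex_of_real d * cis f))^2 = a^2 + d^2 + 2*a*d*cos f"
  unfolding cmod_power2 by (simp add: power2_eq_square algebra_simps sinsq)
lemma cm2: "(cmod (complex_of_real b * cis f + complex_of_real g * cis h))^2 = b^2 + g^2 + 2*b*g*cos (f - h)"
  unfolding cmod_power2 by (simp add: power2_eq_square algebra_simps cos_diff sinsq)

theorem mainTheorem2:
  fixes \<alpha> \<beta> \<gamma> \<delta> \<phi>\<beta> \<phi>\<gamma> \<phi>\<delta> :: real and lam :: "real^3"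
  assumes "\<alpha> \<in> {0..1}" "\<beta> \<in> {0..1}" "\<gamma> \<in> {0..1}" "\<delta> \<in> {0..1}"
    and "\<alpha>^2 + \<beta>^2 + \<gamma>^2 + \<delta>^2 = 1"
    and "\<phi>\<beta> \<in> {0..<2*pi}" "\<phi>\<gamma> \<in> {0..<2*pi}" "\<phi>\<delta> \<in> {0..<2*pi}"
  defines "Q \<equiv> QFIM (\<lambda>l. Uop l *v probe \<alpha> \<beta> \<gamma> \<delta> \<phi>\<beta> \<phi>\<gamma> \<phi>\<delta>) lam"
  shows "det Q = 1024 * (\<alpha>^4 + \<delta>^4 - 2 * \<alpha>^2 * \<delta>^2 * cos (2 * \<phi>\<delta>))
                      * (\<beta>^4 + \<gamma>^4 - 2 * \<beta>^2 * \<gamma>^2 * cos (2 * (\<phi>\<beta> - \<phi>\<gamma>)))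
       \<and> (invertible Q \<longrightarrow>
           trace (matrix_inv Q) = 3 / 16 *
             ((\<alpha>^2 + \<delta>^2) / (\<alpha>^4 - 2 * \<alpha>^2 * \<delta>^2 * cos (2 * \<phi>\<delta>) + \<delta>^4)
              + (\<beta>^2 + \<gamma>^2) / (\<beta>^4 - 2 * \<beta>^2 * \<gamma>^2 * cos (2 * (\<phi>\<beta> - \<phi>\<gamma>)) + \<gamma>^4)))"
proof -
  define v0 where "v0 = probe \<alpha> \<beta> \<gamma> \<delta> \<phi>\<beta> \<phi>\<gamma> \<phi>\<delta>"
  define P where "P m = 2 * qq v0 m" for m
  have w0: "ww v0 0 = (complex_of_real \<alpha> + complex_of_real \<delta> * cis \<phi>\<delta>) / 2"
    by (simp add: v0_def ww_def sum4 bv_def probe_def)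
  have w1: "ww v0 1 = (complex_of_real \<alpha> + complex_of_real (- \<delta>) * cis \<phi>\<delta>) / 2"
    by (simp add: v0_def ww_def sum4 bv_def probe_def)
  have w2: "ww v0 2 = (complex_of_real \<beta> * cis \<phi>\<beta> + complex_of_real \<gamma> * cis \<phi>\<gamma>) / 2"
    by (simp add: v0_def ww_def sum4 bv_def probe_def)
  have w3: "ww v0 3 = (complex_of_real \<beta> * cis \<phi>\<beta> + complex_of_real (- \<gamma>) * cis \<phi>\<gamma>) / 2"
    by (simp add: v0_def ww_def sum4 bv_def probe_def)
  have P0: "P 0 = (\<alpha>^2 + \<delta>^2 + 2 * \<alpha> * \<delta> * cos \<phi>\<delta>) / 2"
    unfolding P_def qq_def w0 norm_divide power_divide cm1 by simp
  have P1: "P 1 = (\<alpha>^2 + \<delta>^2 - 2 * \<alpha> * \<delta> * cos \<phi>\<delta>) / 2"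
    unfolding P_def qq_def w1 norm_divide power_divide cm1 by simp
  have P2: "P 2 = (\<beta>^2 + \<gamma>^2 + 2 * \<beta> * \<gamma> * cos (\<phi>\<beta> - \<phi>\<gamma>)) / 2"
    unfolding P_def qq_def w2 norm_divide power_divide cm2 by simp
  have P3: "P 3 = (\<beta>^2 + \<gamma>^2 - 2 * \<beta> * \<gamma> * cos (\<phi>\<beta> - \<phi>\<gamma>)) / 2"
    unfolding P_def qq_def w3 norm_divide power_divide cm2 by simp
  have sum1: "P 0 + P 1 + P 2 + P 3 = 1"
    using assms(5) by (simp add: P0 P1 P2 P3 field_simps)
  have QQ: "Q = QP P"
    unfolding vec_eq_iff
  proof (intro allI)
    fix j k
    show "Q $ j $ k = QP P $ j $ k"
      unfolding Q_def v0_def[symmetric] using QFIM_eq[of v0 lam j k, unfolded psiv_def]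
      by (simp add: QP_def P_def sum4 algebra_simps)
  qed
  have A: "\<alpha>^4 + \<delta>^4 - 2 * \<alpha>^2 * \<delta>^2 * cos (2 * \<phi>\<delta>) = 4 * P 0 * P 1"
    unfolding cos_double_cos P0 P1 by algebra
  have B: "\<beta>^4 + \<gamma>^4 - 2 * \<beta>^2 * \<gamma>^2 * cos (2 * (\<phi>\<beta> - \<phi>\<gamma>)) = 4 * P 2 * P 3"
    unfolding cos_double_cos P2 P3 by algebra
  have A2: "\<alpha>^2 + \<delta>^2 = P 0 + P 1" by (simp add: P0 P1 field_simps)
  have B2: "\<beta>^2 + \<gamma>^2 = P 2 + P 3" by (simp add: P2 P3 field_simps)
  have detQ: "det Q = 16384 * P 0 * P 1 * P 2 * P 3"
    unfolding QQ by (rule det_QP[OF sum1])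
  show ?thesis
  proof
    show "det Q = 1024 * (\<alpha>^4 + \<delta>^4 - 2 * \<alpha>^2 * \<delta>^2 * cos (2 * \<phi>\<delta>))
                      * (\<beta>^4 + \<gamma>^4 - 2 * \<beta>^2 * \<gamma>^2 * cos (2 * (\<phi>\<beta> - \<phi>\<gamma>)))"
      unfolding A B detQ by simp
  next
    show "invertible Q \<longrightarrow>
           trace (matrix_inv Q) = 3 / 16 *
             ((\<alpha>^2 + \<delta>^2) / (\<alpha>^4 - 2 * \<alpha>^2 * \<delta>^2 * cos (2 * \<phi>\<delta>) + \<delta>^4)
              + (\<beta>^2 + \<gamma>^2) / (\<beta>^4 - 2 * \<beta>^2 * \<gamma>^2 * cos (2 * (\<phi>\<beta> - \<phi>\<gamma>)) + \<gamma>^4))"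
    proof
      assume "invertible Q"
      then have "det Q \<noteq> 0" by (simp add: invertible_det_nz)
      then have nz: "P 0 \<noteq> 0" "P 1 \<noteq> 0" "P 2 \<noteq> 0" "P 3 \<noteq> 0" unfolding detQ by auto
      have A': "\<alpha>^4 - 2 * \<alpha>^2 * \<delta>^2 * cos (2 * \<phi>\<delta>) + \<delta>^4 = 4 * P 0 * P 1" using A by simp
      have B': "\<beta>^4 - 2 * \<beta>^2 * \<gamma>^2 * cos (2 * (\<phi>\<beta> - \<phi>\<gamma>)) + \<gamma>^4 = 4 * P 2 * P 3" using B by simp
      show "trace (matrix_inv Q) = 3 / 16 *
             ((\<alpha>^2 + \<delta>^2) / (\<alpha>^4 - 2 * \<alpha>^2 * \<delta>^2 * cos (2 * \<phi>\<delta>) + \<delta>^4)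
              + (\<beta>^2 + \<gamma>^2) / (\<beta>^4 - 2 * \<beta>^2 * \<gamma>^2 * cos (2 * (\<phi>\<beta> - \<phi>\<gamma>)) + \<gamma>^4))"
        unfolding A' B' A2 B2 QQ trace_QP[OF sum1 nz] using nz by (simp add: field_simps)
    qed
  qed
qed

end
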